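(* Let $Q$ access points be at fixed positions $\mathbf{o}_1,\dots,\mathbf{o}_Q\in\mathbb{R}^2$ and let a user move on $\mathbf{x}_t=\mathbf{x}+t\mathbf{v}$, $t=1,2,\dots$, with $\mathbf{v}\neq\mathbf{0}$, not passing through any AP. Put $\bm{l}_q=\mathbf{x}-\mathbf{o}_q$, $\mathbf{d}_{t,q}=\bm{l}_q+t\mathbf{v}$, $d_{t,q}=\|\mathbf{d}_{t,q}\|$, $d_{\min}=\min_{t,q}d_{t,q}>0$. Let $C_0=G_1N_{\mathrm t}(N_{\mathrm t}^2-1)/(\sigma_{\mathrm n}^2d_{\min}^2)$, $$\mathbf{A}_{T,x}=\sum_{q=1}^{Q}\sum_{t=1}^{T}\frac{d_{t,q}^2\mathbf{I}-\mathbf{d}_{t,q}\mathbf{d}_{t,q}^{\mathrm T}}{d_{t,q}^4},\qquad \bar\Delta_{T,x}=\mathrm{tr}\{(C_0\mathbf{A}_{T,x})^{-1}\}.$$ Then the CRLB of $\mathbf{x}$ satisfies $B(\mathbf{x})=\mathrm{tr}\{\mathbf{F}_{T,x}^{-1}\}\ge\bar\Delta_{T,x}$, with equality achieved when $d_{t,q}=d_{\min}$ and $\phi_{t,q}=0$ for all $t,q$. In addition, $\bar\Delta_{T,x}$ is strictly decreasing in $T$, provided that at least two vectors in $\{\bm{l}_1,\dots,\bm{l}_Q,\mathbf{v}\}$ are linearly independent, but $\bar\Delta_{T,x}$ converges to a strictly positive number as $T\to\infty$.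
   Context: Each AP carries an $N_{\mathrm t}$-element uniform linear array; $G_1>0$ is an antenna-configuration constant and $\sigma_{\mathrm n}^2>0$ is the noise variance. The AoD measurement from AP $q$ at time $t$ is Gaussian with mean the geometric azimuth angle from $\mathbf{o}_q$ to $\mathbf{x}_t$ and variance $\sigma_{\theta,t,q}^2=d_{t,q}^2\sigma_{\mathrm n}^2/(G_1N_{\mathrm t}(N_{\mathrm t}^2-1)\cos^2\phi_{t,q})$, where $\phi_{t,q}$ is the angle of the user relative to the array reference direction of AP $q$ (the single-snapshot ULA angle CRLB). Measurements are independent. $\mathbf{F}_{T,x}$ is the Fisher information of the initial position $\mathbf{x}$ (diagonal block of the FIM of $(\mathbf{x},\mathbf{v})$), namely $\mathbf{F}_{T,x}=\sum_{t=1}^T\sum_{q=1}^Q\frac{1}{\sigma_{\theta,t,q}^2d_{t,q}^4}(d_{t,q}^2\mathbf{I}-\mathbf{d}_{t,q}\mathbf{d}_{t,q}^{\mathrm T})$. *)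

theory Defs
  imports "HOL-Analysis.Analysis"
begin

definition lvec :: "real^2 \<Rightarrow> (nat \<Rightarrow> real^2) \<Rightarrow> nat \<Rightarrow> real^2" where
  "lvec x ap q = x - ap q"

definition dvec :: "real^2 \<Rightarrow> real^2 \<Rightarrow> (nat \<Rightarrow> real^2) \<Rightarrow> nat \<Rightarrow> nat \<Rightarrow> real^2" where
  "dvec x v ap t q = lvec x ap q + real t *\<^sub>R v"

definition outer :: "real^2 \<Rightarrow> real^2^2" where
  "outer u = (\<chi> i j. u $ i * u $ j)"

definition dmin :: "real^2 \<Rightarrow> real^2 \<Rightarrow> (nat \<Rightarrow> real^2) \<Rightarrow> nat \<Rightarrow> real" where
  "dmin x v ap Q = Inf {norm (dvec x v ap t q) | t q. 1 \<le> t \<and> q \<in> {1..Q}}"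

definition C0 :: "real \<Rightarrow> nat \<Rightarrow> real \<Rightarrow> real \<Rightarrow> real" where
  "C0 G1 Nt sn2 dm = G1 * real Nt * (real Nt ^ 2 - 1) / (sn2 * dm ^ 2)"

definition Amat :: "real^2 \<Rightarrow> real^2 \<Rightarrow> (nat \<Rightarrow> real^2) \<Rightarrow> nat \<Rightarrow> nat \<Rightarrow> real^2^2" where
  "Amat x v ap Q T = (\<Sum>q=1..Q. \<Sum>t=1..T.
      (1 / norm (dvec x v ap t q) ^ 4) *\<^sub>R
        ((norm (dvec x v ap t q))\<^sup>2 *\<^sub>R mat 1 - outer (dvec x v ap t q)))"

definition Delta_bar :: "real \<Rightarrow> nat \<Rightarrow> real \<Rightarrow> real^2 \<Rightarrow> real^2 \<Rightarrow> (nat \<Rightarrow> real^2) \<Rightarrow> nat \<Rightarrow> nat \<Rightarrow> real" where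
  "Delta_bar G1 Nt sn2 x v ap Q T =
     trace (matrix_inv (C0 G1 Nt sn2 (dmin x v ap Q) *\<^sub>R Amat x v ap Q T))"

text \<open>AoD measurement variance (single-snapshot ULA angle CRLB); phi t q is the angle of the
  user relative to the array reference direction of AP q at time t.\<close>
definition sigma_theta_sq :: "real \<Rightarrow> nat \<Rightarrow> real \<Rightarrow> real \<Rightarrow> real \<Rightarrow> real" where
  "sigma_theta_sq G1 Nt sn2 d ph = d\<^sup>2 * sn2 / (G1 * real Nt * (real Nt ^ 2 - 1) * (cos ph)\<^sup>2)"

definition Fmat :: "real \<Rightarrow> nat \<Rightarrow> real \<Rightarrow> (nat \<Rightarrow> nat \<Rightarrow> real) \<Rightarrow> real^2 \<Rightarrow> real^2 \<Rightarrow> (nat \<Rightarrow> real^2) \<Rightarrow> nat \<Rightarrow> nat \<Rightarrow> real^2^2" where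
  "Fmat G1 Nt sn2 phi x v ap Q T = (\<Sum>t=1..T. \<Sum>q=1..Q.
      (1 / (sigma_theta_sq G1 Nt sn2 (norm (dvec x v ap t q)) (phi t q) * norm (dvec x v ap t q) ^ 4)) *\<^sub>R
        ((norm (dvec x v ap t q))\<^sup>2 *\<^sub>R mat 1 - outer (dvec x v ap t q)))"

definition CRLB :: "real \<Rightarrow> nat \<Rightarrow> real \<Rightarrow> (nat \<Rightarrow> nat \<Rightarrow> real) \<Rightarrow> real^2 \<Rightarrow> real^2 \<Rightarrow> (nat \<Rightarrow> real^2) \<Rightarrow> nat \<Rightarrow> nat \<Rightarrow> real" where
  "CRLB G1 Nt sn2 phi x v ap Q T = trace (matrix_inv (Fmat G1 Nt sn2 phi x v ap Q T))"

end

theory Submission imports Defs begin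
lemma trace2: "trace (A::real^2^2) = A$1$1 + A$2$2"
  by (simp add: trace_def sum_2)

lemma trace_inv2:
  fixes A :: "real^2^2"
  assumes "det A \<noteq> 0"
  shows "trace (matrix_inv A) = trace A / det A"
proof -
  define d where "d = det A"
  have d: "d = A$1$1 * A$2$2 - A$1$2 * A$2$1" unfolding d_def by (rule det_2)
  define B :: "real^2^2" where "B = (\<chi> i j. if i = 1 then (if j = 1 then A$2$2/d else - A$1$2/d)
       else (if j = 1 then - A$2$1/d else A$1$1/d))"
  have dn: "d \<noteq> 0" using assms d_def by simp
  have mm: "(X ** Y)$i$j = X$i$1 * Y$1$j + X$i$2 * Y$2$j" for X Y :: "real^2^2" and i j
    by (simp add: matrix_matrix_mult_def sum_2)
  have Be: "B$1$1 = A$2$2/d" "B$1$2 = - A$1$2/d" "B$2$1 = - A$2$1/d" "B$2$2 = A$1$1/d"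
    unfolding B_def by simp_all
  have m1: "(mat 1 :: real^2^2)$1$1 = 1" "(mat 1 :: real^2^2)$2$2 = 1"
     "(mat 1 :: real^2^2)$1$2 = 0" "(mat 1 :: real^2^2)$2$1 = 0" by (simp_all add: mat_def)
  have B1: "A ** B = mat 1" "B ** A = mat 1"
    unfolding vec_eq_iff forall_2 mm Be m1 using dn
    by (simp_all add: d divide_simps; simp add: algebra_simps)+
  have ex: "\<exists>A'. A ** A' = mat 1 \<and> A' ** A = mat 1" using B1 by blast
  have M: "A ** matrix_inv A = mat 1 \<and> matrix_inv A ** A = mat 1"
    unfolding matrix_inv_def by (rule someI_ex[OF ex])
  have "matrix_inv A = matrix_inv A ** (A ** B)" using B1 by simp
  also have "\<dots> = B" using M by (simp add: matrix_mul_assoc)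
  finally have "matrix_inv A = B" .
  then show ?thesis unfolding B_def trace2 d_def[symmetric]
    by (simp add: d add_divide_distrib)
qed



lemma psd_pair:
  fixes p r s x y z :: real
  assumes "p \<ge> 0" "s \<ge> 0" "p* s \<ge> r^2" "x \<ge> 0" "z \<ge> 0" "x*z \<ge> y^2"
  shows "p*x + s*z + 2*r*y \<ge> 0"
proof -
  have a: "(p*x + s*z)^2 \<ge> 4*((p* s)*(x*z))"
    using sum_squares_ge_zero[of "p*x - s*z" 0] by (simp add: power2_eq_square algebra_simps)
  have b: "r^2*y^2 \<le> (p* s)*(x*z)"
    using assms by (meson mult_mono' zero_le_power2)
  have c: "p*x + s*z \<ge> 0" using assms by simp
  have e: "\<bar>2*r*y\<bar>^2 = 4*(r^2*y^2)" by (simp add: power_mult_distrib)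
  have "\<bar>2*r*y\<bar>^2 \<le> (p*x+s*z)^2" using a b e by linarith
  hence "\<bar>2*r*y\<bar> \<le> p*x+s*z" by (rule power2_le_imp_le[OF _ c])
  thus ?thesis by linarith
qed

lemma psd_pair_strict:
  fixes p r s x y z :: real
  assumes "p \<ge> 0" "s \<ge> 0" "p* s \<ge> r^2" "x > 0" "z > 0" "x*z > y^2" "p + s > 0"
  shows "p*x + s*z + 2*r*y > 0"
proof -
  have a: "(p*x + s*z)^2 \<ge> 4*((p* s)*(x*z))"
    using sum_squares_ge_zero[of "p*x - s*z" 0] by (simp add: power2_eq_square algebra_simps)
  have px: "p*x \<ge> 0" "s*z \<ge> 0" using assms by simp_all
  have "p*x > 0 \<or> s*z > 0" using assms(1,2,4,5,7) by (auto simp: zero_less_mult_iff)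
  then have c: "p*x + s*z > 0" using px by linarith
  show ?thesis
  proof (cases "r = 0 \<or> y = 0")
    case True then show ?thesis using c by auto
  next
    case False
    hence r2: "r^2 > 0" by auto
    have "r^2*y^2 < r^2*(x*z)" using assms(6) r2 by simp
    also have "... \<le> (p* s)*(x*z)" using assms by (intro mult_right_mono) auto
    finally have b: "r^2*y^2 < (p* s)*(x*z)" .
    have e: "\<bar>2*r*y\<bar>^2 = 4*(r^2*y^2)" by (simp add: power_mult_distrib)
    have "\<bar>2*r*y\<bar>^2 < (p*x+s*z)^2" using a b e by linarith
    hence "\<bar>2*r*y\<bar> < p*x+s*z" by (rule power_less_imp_less_base[OF _ less_imp_le[OF c]])
    thus ?thesis by linarith
  qed
qed

lemma frac_cmp:
  fixes x y u w :: real
  shows "y>0 \<Longrightarrow> w>0 \<Longrightarrow> x*w \<le> u*y \<Longrightarrow> x/y \<le> u/w"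
    and "y>0 \<Longrightarrow> w>0 \<Longrightarrow> x*w < u*y \<Longrightarrow> x/y < u/w"
  by (simp_all add: divide_simps)

lemma lin_le: "(X::real) - Y = T1 + T2 \<Longrightarrow> 0 \<le> T1 \<Longrightarrow> 0 \<le> T2 \<Longrightarrow> Y \<le> X" by linarith
lemma lin_less: "(X::real) - Y = T1 + T2 \<Longrightarrow> 0 \<le> T1 \<Longrightarrow> 0 < T2 \<Longrightarrow> Y < X" by linarith

lemma main_scalar:
  fixes a b c p r s :: real
  assumes "a \<ge> 0" "c \<ge> 0" "a*c - b^2 > 0" "p \<ge> 0" "s \<ge> 0" "p* s \<ge> r^2"
  shows "(a+p)*(c+s) - (b+r)^2 \<ge> a*c - b^2"
    and "(a+p+(c+s))/((a+p)*(c+s) - (b+r)^2) \<le> (a+c)/(a*c-b^2)"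
    and "p + s > 0 \<Longrightarrow> (a+p+(c+s))/((a+p)*(c+s) - (b+r)^2) < (a+c)/(a*c-b^2)"
proof -
  have ac: "a*c > 0" using assms(3) zero_le_power2[of b] by linarith
  have pos: "a > 0" "c > 0" using ac assms(1,2) by (auto simp: zero_less_mult_iff)
  have ac': "0 \<le> c * a - (-b)^2" using assms(3) by (simp add: mult.commute)
  have X1: "0 \<le> p*c + s*a + 2*r*(-b)"
    by (rule psd_pair[OF assms(4) assms(5) assms(6) assms(2) assms(1)]) (use ac' in simp)
  have eqD: "((a+p)*(c+s) - (b+r)^2) - (a*c - b^2) = (p* s - r^2) + (p*c + s*a + 2*r*(-b))"
    by (simp add: power2_eq_square algebra_simps)
  have t0: "0 \<le> p* s - r^2" using assms(6) by simp
  show D: "(a+p)*(c+s) - (b+r)^2 \<ge> a*c - b^2" by (rule lin_le[OF eqD t0 X1])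
  have key: "(a+c)*((a+p)*(c+s) - (b+r)^2) - (a+p+(c+s))*(a*c-b^2)
     = (a+c)*(p* s - r^2) + (p*(c^2+b^2) + s*(a^2+b^2) + 2*r*(-b*(a+c)))"
    by (simp add: power2_eq_square algebra_simps)
  have Xd: "(c^2+b^2)*(a^2+b^2) - (-b*(a+c))^2 = (a*c-b^2)^2"
    by (simp add: power2_eq_square algebra_simps)
  have "(a*c-b^2)^2 > 0" using assms(3) by simp
  hence Xpsd: "(-b*(a+c))^2 < (c^2+b^2)*(a^2+b^2)" using Xd by linarith
  have Dpos: "(a+p)*(c+s) - (b+r)^2 > 0" using D assms(3) by linarith
  have t1: "(a+c)*(p* s - r^2) \<ge> 0" using t0 pos by simp
  have c2: "c^2+b^2 > 0" "a^2+b^2 > 0" using pos by (simp_all add: add_pos_nonneg)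
  have t2: "0 \<le> p*(c^2+b^2) + s*(a^2+b^2) + 2*r*(-b*(a+c))"
    by (rule psd_pair[OF assms(4) assms(5) assms(6)]) (use c2 Xpsd in auto)
  show "(a+p+(c+s))/((a+p)*(c+s) - (b+r)^2) \<le> (a+c)/(a*c-b^2)"
    by (rule frac_cmp(1)[OF Dpos assms(3) lin_le[OF key t1 t2]])
  assume ps: "p + s > 0"
  have t2': "0 < p*(c^2+b^2) + s*(a^2+b^2) + 2*r*(-b*(a+c))"
    by (rule psd_pair_strict[OF assms(4) assms(5) assms(6) c2(1) c2(2) Xpsd ps])
  show "(a+p+(c+s))/((a+p)*(c+s) - (b+r)^2) < (a+c)/(a*c-b^2)"
    by (rule frac_cmp(2)[OF Dpos assms(3) lin_less[OF key t1 t2']])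
qed

definition psd2 :: "real^2^2 \<Rightarrow> bool" where
  "psd2 M \<longleftrightarrow> M$1$2 = M$2$1 \<and> 0 \<le> M$1$1 \<and> 0 \<le> M$2$2 \<and> (M$1$2)^2 \<le> M$1$1 * M$2$2"

lemma psd_add_scalar:
  fixes a11 a22 a12 b11 b22 b12 :: real
  assumes "0 \<le> a11" "0 \<le> a22" "a12^2 \<le> a11 * a22" "0 \<le> b11" "0 \<le> b22" "b12^2 \<le> b11 * b22"
  shows "(a12 + b12)^2 \<le> (a11 + b11) * (a22 + b22)"
proof -
  have h: "0 \<le> a11 * b22 + b11 * a22 + 2 * a12 * (- b12)"
    using psd_pair[of a11 a22 a12 b22 b11 "- b12"] assms by (simp add: mult.commute)
  have e1: "(a12 + b12)^2 = a12^2 + b12^2 + 2 * a12 * b12" by (simp add: power2_eq_square algebra_simps)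
  have e2: "(a11 + b11) * (a22 + b22) = a11 * a22 + b11 * b22 + (a11 * b22 + b11 * a22)"
    by (simp add: algebra_simps)
  show ?thesis unfolding e1 e2 using h assms by linarith
qed

lemma psd2_add: assumes "psd2 A" "psd2 B" shows "psd2 (A + B)"
proof -
  have c: "(A+B)$i$j = A$i$j + B$i$j" for i j by simp
  show ?thesis using assms psd_add_scalar[of "A$1$1" "A$2$2" "A$1$2" "B$1$1" "B$2$2" "B$1$2"]
    unfolding psd2_def c by auto
qed

lemma psd_scale_scalar:
  fixes c x11 x22 x12 :: real
  assumes "0 \<le> c" "x12^2 \<le> x11 * x22"
  shows "(c * x12)^2 \<le> (c * x11) * (c * x22)"
proof -
  have h: "c^2 * x12^2 \<le> c^2 * (x11 * x22)" using assms by (intro mult_left_mono) auto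
  have e1: "(c * x11) * (c * x22) = c^2 * (x11 * x22)" by (simp add: power2_eq_square algebra_simps)
  have e2: "(c * x12)^2 = c^2 * x12^2" by (simp add: power_mult_distrib)
  show ?thesis unfolding e1 e2 by (rule h)
qed

lemma psd2_scale: assumes "psd2 A" "c \<ge> 0" shows "psd2 (c *\<^sub>R A)"
proof -
  have e: "(c *\<^sub>R A)$i$j = c * A$i$j" for i j by simp
  show ?thesis using assms psd_scale_scalar[of c "A$1$2" "A$1$1" "A$2$2"]
    unfolding psd2_def e by auto
qed

lemma psd2_0: "psd2 0" by (simp add: psd2_def)

lemma psd2_sum: assumes "\<And>i. i \<in> S \<Longrightarrow> psd2 (f i)" shows "psd2 (sum f S)"
proof (cases "finite S")
  case True then show ?thesis using assms
    by (induction S rule: finite_induct) (auto simp: psd2_0 psd2_add)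
next
  case False then show ?thesis by (simp add: psd2_0)
qed

lemma norm_sq2: "(norm (u::real^2))^2 = (u$1)^2 + (u$2)^2"
proof -
  have "(norm u)^2 = (\<Sum>i\<in>UNIV. (u$i)^2)"
    unfolding norm_vec_def L2_set_def by (simp add: sum_nonneg)
  then show ?thesis by (simp add: sum_2)
qed

lemma matrix_psd_step:
  fixes F H :: "real^2^2"
  assumes F: "psd2 F" "det F > 0" and H: "psd2 H"
  shows "det (F + H) \<ge> det F"
    and "trace (matrix_inv (F + H)) \<le> trace (matrix_inv F)"
    and "trace H > 0 \<Longrightarrow> trace (matrix_inv (F + H)) < trace (matrix_inv F)"
proof -
  have eF: "F$2$1 = F$1$2" "H$2$1 = H$1$2" using F H unfolding psd2_def by auto
  have dF: "det F = F$1$1 * F$2$2 - (F$1$2)^2" by (simp add: det_2 eF power2_eq_square)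
  have dG: "det (F+H) = (F$1$1 + H$1$1) * (F$2$2 + H$2$2) - (F$1$2 + H$1$2)^2"
    by (simp add: det_2 eF power2_eq_square)
  note ms = main_scalar[of "F$1$1" "F$2$2" "F$1$2" "H$1$1" "H$2$2" "H$1$2"]
  have hyp: "F$1$1 \<ge> 0" "F$2$2 \<ge> 0" "F$1$1 * F$2$2 - (F$1$2)^2 > 0" "H$1$1 \<ge> 0" "H$2$2 \<ge> 0"
     "H$1$1 * H$2$2 \<ge> (H$1$2)^2" using F H dF unfolding psd2_def by auto
  show "det (F + H) \<ge> det F" unfolding dF dG by (rule ms(1)[OF hyp])
  have pos: "det (F+H) > 0" using \<open>det (F + H) \<ge> det F\<close> F by linarith
  have pn: "det (F+H) \<noteq> 0" "det F \<noteq> 0" using pos F by auto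
  have tG: "trace (matrix_inv (F + H)) = (F$1$1 + H$1$1 + (F$2$2 + H$2$2)) / det (F+H)"
    unfolding trace_inv2[OF pn(1)] by (simp add: trace2)
  have tF: "trace (matrix_inv F) = (F$1$1 + F$2$2) / det F"
    unfolding trace_inv2[OF pn(2)] by (simp add: trace2)
  show "trace (matrix_inv (F + H)) \<le> trace (matrix_inv F)"
    unfolding tG tF dG dF by (rule ms(2)[OF hyp])
  assume "trace H > 0"
  then have "H$1$1 + H$2$2 > 0" by (simp add: trace2)
  then show "trace (matrix_inv (F + H)) < trace (matrix_inv F)"
    unfolding tG tF dG dF by (rule ms(3)[OF hyp])
qed

lemma trace_inv_lower:
  fixes A :: "real^2^2"
  assumes "psd2 A" "det A > 0"
  shows "trace (matrix_inv A) \<ge> 4 / trace A"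
proof -
  have e: "A$2$1 = A$1$2" using assms unfolding psd2_def by auto
  have dA: "det A = A$1$1 * A$2$2 - (A$1$2)^2" by (simp add: det_2 e power2_eq_square)
  have tp: "trace A > 0"
  proof (rule ccontr)
    assume "\<not> trace A > 0"
    moreover have "A$1$1 \<ge> 0" "A$2$2 \<ge> 0" using assms(1) unfolding psd2_def by auto
    ultimately have "A$1$1 = 0" "A$2$2 = 0" unfolding trace2 by linarith+
    then have "det A \<le> 0" unfolding dA by simp
    then show False using assms(2) by linarith
  qed
  have h: "4 * det A \<le> trace A * trace A"
    using dA sum_squares_ge_zero[of "A$1$1 - A$2$2" "2 * A$1$2"] unfolding trace2
    by (simp add: power2_eq_square algebra_simps)
  have "4 / trace A \<le> trace A / det A"
    by (rule frac_cmp(1)[OF tp assms(2) h])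
  moreover have "det A \<noteq> 0" using assms(2) by simp
  ultimately show ?thesis unfolding trace_inv2[OF \<open>det A \<noteq> 0\<close>] by simp
qed


definition Kd :: "real^2 \<Rightarrow> real^2^2" where
  "Kd u = (1 / norm u ^ 4) *\<^sub>R ((norm u)\<^sup>2 *\<^sub>R mat 1 - outer u)"

lemma Kd_entries:
  "Kd u $1$1 = (u$2)^2 / norm u ^ 4" "Kd u $2$2 = (u$1)^2 / norm u ^ 4"
  "Kd u $1$2 = - (u$1 * u$2) / norm u ^ 4" "Kd u $2$1 = - (u$1 * u$2) / norm u ^ 4"
proof -
  have n2: "norm u * norm u = u$1 * u$1 + u$2 * u$2" using norm_sq2[of u] by (simp add: power2_eq_square)
  show "Kd u $1$1 = (u$2)^2 / norm u ^ 4" "Kd u $2$2 = (u$1)^2 / norm u ^ 4"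
    "Kd u $1$2 = - (u$1 * u$2) / norm u ^ 4" "Kd u $2$1 = - (u$1 * u$2) / norm u ^ 4"
    by (simp_all add: Kd_def outer_def mat_def power2_eq_square n2 mult.commute)
qed

lemma Kd_entries':
  "Kd u $1$1 = (1 / norm u ^ 4) * (u$2)^2" "Kd u $2$2 = (1 / norm u ^ 4) * (u$1)^2"
  "Kd u $1$2 = - ((1 / norm u ^ 4) * (u$1 * u$2))" "Kd u $2$1 = - ((1 / norm u ^ 4) * (u$1 * u$2))"
  unfolding Kd_entries by simp_all

lemma Kd_psd: "psd2 (Kd u)"
proof -
  define \<alpha> where "\<alpha> = 1 / norm u ^ 4"
  have a: "\<alpha> \<ge> 0" unfolding \<alpha>_def by simp
  have e: "(- (\<alpha> * (u$1 * u$2)))^2 = (\<alpha> * (u$2)^2) * (\<alpha> * (u$1)^2)"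
    by (simp add: power2_eq_square algebra_simps)
  show ?thesis unfolding psd2_def Kd_entries' \<alpha>_def[symmetric] e using a by simp
qed

lemma Kd_trace: "trace (Kd u) = 1 / (norm u)^2"
proof -
  have "trace (Kd u) = ((u$1)^2 + (u$2)^2) / norm u ^ 4"
    by (simp add: trace2 Kd_entries add_divide_distrib)
  also have "\<dots> = (norm u)^2 / norm u ^ 4" by (simp only: norm_sq2)
  also have "\<dots> = 1 / (norm u)^2"
  proof (cases "norm u = 0")
    case True then show ?thesis by simp
  next
    case False
    have e4: "norm u ^ 4 = (norm u)^2 * (norm u)^2" by (simp add: power4_eq_xxxx power2_eq_square)
    have nz: "(norm u)^2 \<noteq> 0" using False by simp
    show ?thesis unfolding e4 by (rule nonzero_divide_mult_cancel_left[OF nz])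
  qed
  finally show ?thesis .
qed

definition cross2 :: "real^2 \<Rightarrow> real^2 \<Rightarrow> real" where
  "cross2 a b = a$1 * b$2 - a$2 * b$1"

lemma det_Kd_pair:
  "det (Kd u + Kd w) = (1 / norm u ^ 4) * (1 / norm w ^ 4) * (cross2 u w)^2"
proof -
  define \<alpha> where "\<alpha> = 1 / norm u ^ 4"
  define \<beta> where "\<beta> = 1 / norm w ^ 4"
  have "det (Kd u + Kd w) = (Kd u $1$1 + Kd w $1$1) * (Kd u $2$2 + Kd w $2$2)
        - (Kd u $1$2 + Kd w $1$2) * (Kd u $2$1 + Kd w $2$1)" by (simp add: det_2)
  also have "\<dots> = (\<alpha> * (u$2)^2 + \<beta> * (w$2)^2) * (\<alpha> * (u$1)^2 + \<beta> * (w$1)^2)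
        - (- (\<alpha> * (u$1 * u$2)) - \<beta> * (w$1 * w$2)) * (- (\<alpha> * (u$1 * u$2)) - \<beta> * (w$1 * w$2))"
    unfolding Kd_entries' \<alpha>_def \<beta>_def by simp
  also have "\<dots> = \<alpha> * \<beta> * (u$1 * w$2 - u$2 * w$1)^2"
    by (simp add: power2_eq_square algebra_simps)
  finally show ?thesis unfolding \<alpha>_def \<beta>_def cross2_def .
qed

lemma det_scale2: "det (c *\<^sub>R (A::real^2^2)) = c^2 * det A"
  by (simp add: det_2 power2_eq_square algebra_simps)

lemma psd2_det_nonneg: assumes "psd2 A" shows "det A \<ge> 0"
proof -
  have e: "A$2$1 = A$1$2" and h: "(A$1$2)^2 \<le> A$1$1 * A$2$2" using assms unfolding psd2_def by auto
  have "det A = A$1$1 * A$2$2 - (A$1$2)^2" by (simp add: det_2 e power2_eq_square)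
  then show ?thesis using h by linarith
qed

lemma trace_scale2: "trace (c *\<^sub>R (A::real^2^2)) = c * trace A"
  by (simp add: trace2 algebra_simps)

lemma dependent_if_cross0:
  fixes a b :: "real^2"
  assumes "a \<noteq> b" "cross2 a b = 0"
  shows "dependent {a, b}"
proof (cases "a = 0")
  case True then show ?thesis by (simp add: dependent_zero)
next
  case False
  then have "a$1 \<noteq> 0 \<or> a$2 \<noteq> 0" by (simp add: vec_eq_iff forall_2)
  then obtain k where k: "b = k *\<^sub>R a"
  proof
    assume h: "a$1 \<noteq> 0"
    have "b = (b$1 / a$1) *\<^sub>R a" using h assms(2) unfolding cross2_def
      by (simp add: vec_eq_iff forall_2 field_simps; simp add: algebra_simps)
    then show ?thesis using that by blast
  next
    assume h: "a$2 \<noteq> 0"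
    have "b = (b$2 / a$2) *\<^sub>R a" using h assms(2) unfolding cross2_def
      by (simp add: vec_eq_iff forall_2 field_simps; simp add: algebra_simps)
    then show ?thesis using that by blast
  qed
  have "b \<in> span ({a, b} - {b})" using assms(1) k
    by (simp add: span_base span_scale insert_Diff_if)
  then show ?thesis unfolding dependent_def by blast
qed

lemma cross_pair_v:
  assumes "cross2 p q \<noteq> 0" "(v::real^2) \<noteq> 0"
  shows "cross2 p v \<noteq> 0 \<or> cross2 q v \<noteq> 0"
proof (rule ccontr)
  assume "\<not> ?thesis"
  then have h: "p$1 * v$2 = p$2 * v$1" "q$1 * v$2 = q$2 * v$1" unfolding cross2_def by auto
  have "v$1 * cross2 p q = p$1 * (q$2 * v$1) - q$1 * (p$2 * v$1)"
    unfolding cross2_def by (simp add: algebra_simps)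
  also have "\<dots> = p$1 * (q$1 * v$2) - q$1 * (p$1 * v$2)" using h by simp
  also have "\<dots> = 0" by simp
  finally have "v$1 * cross2 p q = 0" .
  moreover have "v$2 * cross2 p q = q$2 * (p$1 * v$2) - p$2 * (q$1 * v$2)"
    unfolding cross2_def by (simp add: algebra_simps)
  moreover have "q$2 * (p$1 * v$2) - p$2 * (q$1 * v$2) = q$2 * (p$2 * v$1) - p$2 * (q$2 * v$1)"
    using h by simp
  ultimately have "v$1 * cross2 p q = 0" "v$2 * cross2 p q = 0" by simp_all
  then have "v$1 = 0" "v$2 = 0" using assms(1) by auto
  then show False using assms(2) by (simp add: vec_eq_iff forall_2)
qed


lemma Amat_Kd: "Amat x v ap Q T = (\<Sum>q=1..Q. \<Sum>t=1..T. Kd (dvec x v ap t q))"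
  by (simp add: Amat_def Kd_def)

lemma Fmat_Kd: "Fmat G1 Nt sn2 phi x v ap Q T = (\<Sum>q=1..Q. \<Sum>t=1..T.
   (1 / sigma_theta_sq G1 Nt sn2 (norm (dvec x v ap t q)) (phi t q)) *\<^sub>R Kd (dvec x v ap t q))"
  unfolding Fmat_def Kd_def by (subst sum.swap) (simp add: scaleR_scaleR)

lemma Amat_Suc: "Amat x v ap Q (Suc T) = Amat x v ap Q T + (\<Sum>q=1..Q. Kd (dvec x v ap (Suc T) q))"
  unfolding Amat_Kd by (simp add: sum.distrib)

lemma dvec_ne:
  assumes "\<forall>t\<ge>1. \<forall>q\<in>{1..Q}. x + real t *\<^sub>R v \<noteq> ap q" "t \<ge> 1" "q \<in> {1..Q}"
  shows "dvec x v ap t q \<noteq> 0"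
proof
  assume "dvec x v ap t q = 0"
  then have "x + real t *\<^sub>R v = ap q" unfolding dvec_def lvec_def by (simp add: algebra_simps)
  then show False using assms by blast
qed

lemma dmin_le: "1 \<le> t \<Longrightarrow> q \<in> {1..Q} \<Longrightarrow> dmin x v ap Q \<le> norm (dvec x v ap t q)"
  unfolding dmin_def by (rule cInf_lower) (auto intro!: bdd_belowI[of _ 0])

lemma norm_dvec_lower: "norm (dvec x v ap t q) \<ge> real t * norm v - norm (lvec x ap q)"
proof -
  have "norm (real t *\<^sub>R v) - norm (lvec x ap q) \<le> norm (real t *\<^sub>R v + lvec x ap q)"
    by (rule norm_diff_ineq)
  then show ?thesis unfolding dvec_def by (simp add: add.commute)
qed

lemma dmin_pos:
  assumes Q: "Q \<ge> 1" and v: "v \<noteq> 0"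
    and no_AP: "\<forall>t\<ge>1. \<forall>q\<in>{1..Q}. x + real t *\<^sub>R v \<noteq> ap q"
  shows "dmin x v ap Q > 0"
proof -
  define R where "R = (\<Sum>q\<in>{1..Q}. norm (lvec x ap q))"
  have R0: "R \<ge> 0" unfolding R_def by (simp add: sum_nonneg)
  have Rq: "norm (lvec x ap q) \<le> R" if "q \<in> {1..Q}" for q
    unfolding R_def by (rule member_le_sum) (use that in auto)
  have nv: "norm v > 0" using v by simp
  obtain N :: nat where N: "(R + 1) / norm v < real N" using reals_Archimedean2 by blast
  have "(R + 1) / norm v > 0" using R0 nv by simp
  then have "real N > 0" using N by linarith
  then have N1: "N \<ge> 1" by simp
  define S where "S = (\<lambda>(t,q). norm (dvec x v ap t q)) ` ({1..N} \<times> {1..Q})"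
  have Sf: "finite S" "S \<noteq> {}" unfolding S_def using N1 Q by auto
  have Spos: "0 < Min S" unfolding Min_gr_iff[OF Sf]
    unfolding S_def using dvec_ne[OF no_AP] by auto
  define b where "b = min 1 (Min S)"
  have bpos: "b > 0" unfolding b_def using Spos by simp
  have bl: "b \<le> norm (dvec x v ap t q)" if "t \<ge> 1" "q \<in> {1..Q}" for t q
  proof (cases "t \<le> N")
    case True
    then have "norm (dvec x v ap t q) \<in> S" unfolding S_def using that by force
    then have "Min S \<le> norm (dvec x v ap t q)" using Sf by simp
    then show ?thesis unfolding b_def by simp
  next
    case False
    have "R + 1 < real N * norm v" using N nv by (simp add: divide_less_eq)
    also have "\<dots> \<le> real t * norm v" using False nv by (intro mult_right_mono) auto
    finally have "1 \<le> real t * norm v - norm (lvec x ap q)" using Rq[OF that(2)] by linarith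
    then show ?thesis using norm_dvec_lower[where x=x and v=v and ap=ap and t=t and q=q] unfolding b_def by linarith
  qed
  have "b \<le> dmin x v ap Q" unfolding dmin_def
    by (rule cInf_greatest) (use bl Q in auto)
  then show ?thesis using bpos by linarith
qed

lemma summable_inv_sq:
  assumes v: "v \<noteq> 0"
  shows "summable (\<lambda>t. 1 / (norm (dvec x v ap t q))^2)"
proof -
  define L where "L = norm (lvec x ap q)"
  have nv: "norm v > 0" using v by simp
  obtain t0 :: nat where t0: "2 * L / norm v < real t0" using reals_Archimedean2 by blast
  have ev: "eventually (\<lambda>t. norm (1 / (norm (dvec x v ap t q))^2) \<le> (4 / norm v ^ 2) * inverse (real t ^ 2)) sequentially"
    using eventually_ge_at_top[of "max t0 1"]
  proof (rule eventually_mono)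
    fix t assume tt: "max t0 1 \<le> t"
    have "2 * L < real t0 * norm v" using t0 nv by (simp add: divide_less_eq)
    also have "\<dots> \<le> real t * norm v" using tt nv by (intro mult_right_mono) auto
    finally have a: "2 * L < real t * norm v" .
    have tp: "real t > 0" using tt by auto
    have h: "real t * norm v / 2 \<le> norm (dvec x v ap t q)"
      using norm_dvec_lower[where x=x and v=v and ap=ap and t=t and q=q] a unfolding L_def by linarith
    have hp: "real t * norm v / 2 > 0" using tp nv by simp
    have "1 / (norm (dvec x v ap t q))^2 \<le> 1 / (real t * norm v / 2)^2"
      using h hp tp by (intro divide_left_mono power_mono mult_pos_pos) auto
    also have "\<dots> = (4 / norm v ^ 2) * inverse (real t ^ 2)"
      using tp nv by (simp add: field_simps power2_eq_square)
    finally show "norm (1 / (norm (dvec x v ap t q))^2) \<le> (4 / norm v ^ 2) * inverse (real t ^ 2)"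
      by simp
  qed
  have "summable (\<lambda>t. (4 / norm v ^ 2) * inverse (real t ^ 2))"
    by (intro summable_mult inverse_power_summable) simp
  then show ?thesis using ev by (rule summable_comparison_test_ev[rotated])
qed


lemma cross2_swap: "cross2 a b = - cross2 b a"
  unfolding cross2_def by simp

lemma trace_sum2: "trace (sum f S :: real^2^2) = (\<Sum>i\<in>S. trace (f i))"
  by (simp add: trace2 sum_component sum.distrib)

lemma psd2_trace_pos: "psd2 A \<Longrightarrow> det A > 0 \<Longrightarrow> trace A > 0"
  unfolding psd2_def trace2 det_2
  by (smt (verit) mult_nonneg_nonneg zero_le_power2 mult_eq_0_iff power2_eq_square)

theorem proposition1:
  fixes ap :: "nat \<Rightarrow> real^2" and x v :: "real^2" and Q Nt :: nat
    and G1 sn2 :: real and phi :: "nat \<Rightarrow> nat \<Rightarrow> real"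
  assumes Q: "Q \<ge> 1"
    and v: "v \<noteq> 0"
    and no_AP: "\<forall>t\<ge>1. \<forall>q\<in>{1..Q}. x + real t *\<^sub>R v \<noteq> ap q"
    and G1: "G1 > 0" and sn2: "sn2 > 0" and Nt: "Nt \<ge> 2"
    and phi: "\<forall>t\<ge>1. \<forall>q\<in>{1..Q}. cos (phi t q) \<noteq> 0"
  shows "(\<forall>T\<ge>1. invertible (Fmat G1 Nt sn2 phi x v ap Q T) \<longrightarrow>
            CRLB G1 Nt sn2 phi x v ap Q T \<ge> Delta_bar G1 Nt sn2 x v ap Q T \<and>
            ((\<forall>t\<in>{1..T}. \<forall>q\<in>{1..Q}. norm (dvec x v ap t q) = dmin x v ap Q \<and> phi t q = 0)
               \<longrightarrow> CRLB G1 Nt sn2 phi x v ap Q T = Delta_bar G1 Nt sn2 x v ap Q T))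
         \<and> ((\<exists>a\<in>insert v (lvec x ap ` {1..Q}). \<exists>b\<in>insert v (lvec x ap ` {1..Q}).
                a \<noteq> b \<and> independent {a, b}) \<longrightarrow>
            (\<forall>T\<ge>1. invertible (Amat x v ap Q T) \<longrightarrow>
                Delta_bar G1 Nt sn2 x v ap Q (Suc T) < Delta_bar G1 Nt sn2 x v ap Q T) \<and>
            (\<exists>L>0. (\<lambda>T. Delta_bar G1 Nt sn2 x v ap Q T) \<longlonglongrightarrow> L))"
proof -
  define n where "n t q = norm (dvec x v ap t q)" for t q
  define dm where "dm = dmin x v ap Q"
  define k where "k = G1 * real Nt * (real Nt ^ 2 - 1)"
  define C where "C = C0 G1 Nt sn2 dm"
  have "real Nt ^ 2 \<ge> 2 ^ 2" using Nt by (intro power_mono) auto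
  then have kpos: "k > 0" unfolding k_def using G1 Nt by simp
  have dmpos: "dm > 0" unfolding dm_def by (rule dmin_pos[OF Q v no_AP])
  have dmle: "dm \<le> n t q" if "t \<ge> 1" "q \<in> {1..Q}" for t q
    unfolding dm_def n_def using dmin_le that by blast
  have npos: "n t q > 0" if "t \<ge> 1" "q \<in> {1..Q}" for t q
    using dmle[OF that] dmpos by linarith
  have Ceq: "C = k / (sn2 * dm^2)" unfolding C_def C0_def k_def by simp
  have Cpos: "C > 0" unfolding Ceq using kpos sn2 dmpos by simp
  have Delta_eq: "Delta_bar G1 Nt sn2 x v ap Q T = trace (matrix_inv (C *\<^sub>R Amat x v ap Q T))" for T
    unfolding Delta_bar_def C_def dm_def ..
  define w where "w t q = 1 / sigma_theta_sq G1 Nt sn2 (n t q) (phi t q)" for t q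
  have weq: "w t q = k * (cos (phi t q))^2 / ((n t q)^2 * sn2)" for t q
    unfolding w_def sigma_theta_sq_def k_def by simp
  have wnn: "w t q \<ge> 0" for t q unfolding weq using kpos sn2 by simp
  have wle: "w t q \<le> C" if "t \<ge> 1" "q \<in> {1..Q}" for t q
    unfolding weq Ceq
  proof (rule frac_le)
    have "(cos (phi t q))^2 \<le> 1" using sin_cos_squared_add[of "phi t q"] by (smt (verit) zero_le_power2)
    then show "k * (cos (phi t q))^2 \<le> k" using kpos by (simp add: mult_le_cancel_left1)
    show "0 \<le> k" using kpos by simp
    show "0 < sn2 * dm^2" using sn2 dmpos by simp
    have "dm^2 \<le> (n t q)^2" using dmle[OF that] dmpos by (intro power_mono) auto
    then show "sn2 * dm^2 \<le> (n t q)^2 * sn2" using sn2 by (simp add: mult.commute)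
  qed
  have Fmat_eq: "Fmat G1 Nt sn2 phi x v ap Q T = (\<Sum>q=1..Q. \<Sum>t=1..T. w t q *\<^sub>R Kd (dvec x v ap t q))" for T
    unfolding Fmat_Kd w_def n_def ..
  have CA_eq: "C *\<^sub>R Amat x v ap Q T = (\<Sum>q=1..Q. \<Sum>t=1..T. C *\<^sub>R Kd (dvec x v ap t q))" for T
    unfolding Amat_Kd by (simp add: scaleR_sum_right)
  have psdA: "psd2 (Amat x v ap Q T)" for T
    unfolding Amat_Kd by (intro psd2_sum Kd_psd)
  have part1: "CRLB G1 Nt sn2 phi x v ap Q T \<ge> Delta_bar G1 Nt sn2 x v ap Q T \<and>
            ((\<forall>t\<in>{1..T}. \<forall>q\<in>{1..Q}. norm (dvec x v ap t q) = dmin x v ap Q \<and> phi t q = 0)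
               \<longrightarrow> CRLB G1 Nt sn2 phi x v ap Q T = Delta_bar G1 Nt sn2 x v ap Q T)"
    if T1: "T \<ge> 1" and inv: "invertible (Fmat G1 Nt sn2 phi x v ap Q T)" for T
  proof
    define F where "F = Fmat G1 Nt sn2 phi x v ap Q T"
    define H where "H = (\<Sum>q=1..Q. \<Sum>t=1..T. (C - w t q) *\<^sub>R Kd (dvec x v ap t q))"
    have "(\<Sum>q=1..Q. \<Sum>t=1..T. (w t q + (C - w t q)) *\<^sub>R Kd (dvec x v ap t q)) = F + H"
      unfolding F_def H_def Fmat_eq by (simp only: scaleR_add_left sum.distrib)
    then have GFH: "C *\<^sub>R Amat x v ap Q T = F + H" unfolding CA_eq by simp
    have psdF: "psd2 F" unfolding F_def Fmat_eq
      by (intro psd2_sum psd2_scale Kd_psd wnn)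
    have psdH: "psd2 H" unfolding H_def
      by (intro psd2_sum psd2_scale Kd_psd) (use wle in auto)
    have detF: "det F > 0" using psd2_det_nonneg[OF psdF] inv invertible_det_nz[of F]
      unfolding F_def by linarith
    have "trace (matrix_inv (F + H)) \<le> trace (matrix_inv F)"
      by (rule matrix_psd_step(2)[OF psdF detF psdH])
    then show "CRLB G1 Nt sn2 phi x v ap Q T \<ge> Delta_bar G1 Nt sn2 x v ap Q T"
      unfolding CRLB_def Delta_eq GFH F_def .
    show "(\<forall>t\<in>{1..T}. \<forall>q\<in>{1..Q}. norm (dvec x v ap t q) = dmin x v ap Q \<and> phi t q = 0)
               \<longrightarrow> CRLB G1 Nt sn2 phi x v ap Q T = Delta_bar G1 Nt sn2 x v ap Q T"
    proof
      assume all: "\<forall>t\<in>{1..T}. \<forall>q\<in>{1..Q}. norm (dvec x v ap t q) = dmin x v ap Q \<and> phi t q = 0"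
      have "w t q = C" if "t \<in> {1..T}" "q \<in> {1..Q}" for t q
        using all that unfolding weq Ceq n_def dm_def by (simp add: mult.commute)
      then have "F = C *\<^sub>R Amat x v ap Q T" unfolding F_def Fmat_eq CA_eq
        by (intro sum.cong refl) simp
      then show "CRLB G1 Nt sn2 phi x v ap Q T = Delta_bar G1 Nt sn2 x v ap Q T"
        unfolding CRLB_def Delta_eq F_def by simp
    qed
  qed
  have part2a: "Delta_bar G1 Nt sn2 x v ap Q (Suc T) < Delta_bar G1 Nt sn2 x v ap Q T"
    if inv: "invertible (Amat x v ap Q T)" for T
  proof -
    define F where "F = C *\<^sub>R Amat x v ap Q T"
    define H where "H = C *\<^sub>R (\<Sum>q=1..Q. Kd (dvec x v ap (Suc T) q))"
    have e: "C *\<^sub>R Amat x v ap Q (Suc T) = F + H"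
      unfolding F_def H_def Amat_Suc by (simp add: scaleR_add_right)
    have psdF: "psd2 F" unfolding F_def using Cpos by (intro psd2_scale psdA) auto
    have psdH: "psd2 H" unfolding H_def using Cpos by (intro psd2_scale psd2_sum Kd_psd) auto
    have "det (Amat x v ap Q T) > 0" using psd2_det_nonneg[OF psdA] inv invertible_det_nz
      by (metis order_le_less)
    then have detF: "det F > 0" unfolding F_def det_scale2 using Cpos by simp
    have "(\<Sum>q=1..Q. 1 / (n (Suc T) q)^2) > 0"
    proof (rule sum_pos)
      fix q assume "q \<in> {1..Q}"
      then have "n (Suc T) q > 0" using npos[of "Suc T" q] by simp
      then show "0 < 1 / (n (Suc T) q)^2" by simp
    qed (use Q in auto)
    then have trH: "trace H > 0" unfolding H_def trace_scale2 trace_sum2 Kd_trace n_def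
      using Cpos by simp
    show ?thesis unfolding Delta_eq e F_def[symmetric]
      by (rule matrix_psd_step(3)[OF psdF detF psdH trH])
  qed
  have part2b: "\<exists>L>0. (\<lambda>T. Delta_bar G1 Nt sn2 x v ap Q T) \<longlonglongrightarrow> L"
    if hyp: "\<exists>a\<in>insert v (lvec x ap ` {1..Q}). \<exists>b\<in>insert v (lvec x ap ` {1..Q}).
                a \<noteq> b \<and> independent {a, b}"
  proof -
    obtain a b where ab: "a \<in> insert v (lvec x ap ` {1..Q})" "b \<in> insert v (lvec x ap ` {1..Q})"
      "a \<noteq> b" "independent {a, b}" using hyp by blast
    have cab: "cross2 a b \<noteq> 0" using dependent_if_cross0 ab(3,4) by blast
    have "\<exists>q0\<in>{1..Q}. cross2 (lvec x ap q0) v \<noteq> 0"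
    proof (cases "a = v")
      case True
      then obtain q where q: "q \<in> {1..Q}" "b = lvec x ap q" using ab by auto
      then show ?thesis using cab True cross2_swap[of v b] by auto
    next
      case False
      then obtain p where p: "p \<in> {1..Q}" "a = lvec x ap p" using ab by auto
      show ?thesis
      proof (cases "b = v")
        case True then show ?thesis using p cab by auto
      next
        case False
        then obtain q where q: "q \<in> {1..Q}" "b = lvec x ap q" using ab by auto
        show ?thesis using cross_pair_v[of a b v] cab v p q by auto
      qed
    qed
    then obtain q0 where q0: "q0 \<in> {1..Q}" "cross2 (lvec x ap q0) v \<noteq> 0" by blast
    have detpos: "det (Amat x v ap Q T) > 0" if T2: "T \<ge> 2" for T
    proof -
      define g where "g q = (\<Sum>t=1..T. Kd (dvec x v ap t q))" for q
      define R1 where "R1 = (\<Sum>t\<in>({1..T} - {1}) - {2}. Kd (dvec x v ap t q0))"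
      define R2 where "R2 = (\<Sum>q\<in>{1..Q} - {q0}. g q)"
      have "Amat x v ap Q T = g q0 + R2" unfolding Amat_Kd R2_def g_def
        using q0 by (simp add: sum.remove)
      also have "g q0 = Kd (dvec x v ap 1 q0) + (Kd (dvec x v ap 2 q0) + R1)"
      proof -
        have s1: "(\<Sum>t\<in>{1..T}. Kd (dvec x v ap t q0)) = Kd (dvec x v ap 1 q0) + (\<Sum>t\<in>{1..T}-{1}. Kd (dvec x v ap t q0))"
          by (rule sum.remove) (use T2 in auto)
        have s2: "(\<Sum>t\<in>{1..T}-{1}. Kd (dvec x v ap t q0)) = Kd (dvec x v ap 2 q0) + (\<Sum>t\<in>{1..T}-{1}-{2}. Kd (dvec x v ap t q0))"
          by (rule sum.remove) (use T2 in auto)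
        show ?thesis unfolding g_def R1_def s1 s2 ..
      qed
      finally have AE: "Amat x v ap Q T = (Kd (dvec x v ap 1 q0) + Kd (dvec x v ap 2 q0)) + (R1 + R2)"
        by (simp add: add.assoc)
      have psdR: "psd2 (R1 + R2)" unfolding R1_def R2_def g_def
        by (intro psd2_add psd2_sum Kd_psd)
      have psdK: "psd2 (Kd (dvec x v ap 1 q0) + Kd (dvec x v ap 2 q0))"
        by (intro psd2_add Kd_psd)
      have cr: "cross2 (dvec x v ap 1 q0) (dvec x v ap 2 q0) = cross2 (lvec x ap q0) v"
        unfolding cross2_def dvec_def by (simp add: algebra_simps)
      have n1: "norm (dvec x v ap 1 q0) > 0" "norm (dvec x v ap 2 q0) > 0"
        using npos[of 1 q0] npos[of 2 q0] q0 unfolding n_def by auto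
      have dK: "det (Kd (dvec x v ap 1 q0) + Kd (dvec x v ap 2 q0)) > 0"
        unfolding det_Kd_pair cr using n1 q0 by simp
      show ?thesis unfolding AE using matrix_psd_step(1)[OF psdK dK psdR] dK by linarith
    qed
    define Ktot where "Ktot = (\<Sum>q=1..Q. suminf (\<lambda>t. 1 / (n t q)^2))"
    have trA: "trace (Amat x v ap Q T) \<le> Ktot" for T
      unfolding Amat_Kd trace_sum2 Kd_trace Ktot_def
    proof (intro sum_mono)
      fix q
      show "(\<Sum>t=1..T. 1 / (norm (dvec x v ap t q))\<^sup>2) \<le> suminf (\<lambda>t. 1 / (n t q)^2)"
        unfolding n_def by (rule sum_le_suminf[OF summable_inv_sq[OF v]]) auto
    qed
    have trpos: "trace (Amat x v ap Q T) > 0" if "T \<ge> 2" for T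
      using psd2_trace_pos[OF psdA detpos[OF that]] .
    have Kpos: "Ktot > 0" using trA[of 2] trpos[of 2] by simp
    define \<beta> where "\<beta> = 4 / (C * Ktot)"
    have bpos: "\<beta> > 0" unfolding \<beta>_def using Cpos Kpos by simp
    have lowb: "\<beta> \<le> Delta_bar G1 Nt sn2 x v ap Q T" if "T \<ge> 2" for T
    proof -
      have psdC: "psd2 (C *\<^sub>R Amat x v ap Q T)" using Cpos by (intro psd2_scale psdA) auto
      have dC: "det (C *\<^sub>R Amat x v ap Q T) > 0" unfolding det_scale2 using Cpos detpos[OF that] by simp
      have "\<beta> \<le> 4 / (C * trace (Amat x v ap Q T))" unfolding \<beta>_def
        using Cpos trpos[OF that] trA[of T] by (intro divide_left_mono mult_left_mono mult_pos_pos) auto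
      also have "\<dots> \<le> Delta_bar G1 Nt sn2 x v ap Q T"
        using trace_inv_lower[OF psdC dC] unfolding Delta_eq trace_scale2 .
      finally show ?thesis .
    qed
    define X where "X i = Delta_bar G1 Nt sn2 x v ap Q (i + 2)" for i
    have "decseq X" unfolding X_def
    proof (rule decseq_SucI)
      fix i
      have "invertible (Amat x v ap Q (i + 2))" using detpos[of "i+2"] invertible_det_nz by force
      from part2a[OF this] show "Delta_bar G1 Nt sn2 x v ap Q (Suc i + 2) \<le> Delta_bar G1 Nt sn2 x v ap Q (i + 2)"
        by simp
    qed
    moreover have "\<forall>i. \<beta> \<le> X i" unfolding X_def using lowb by simp
    ultimately obtain L where L: "X \<longlonglongrightarrow> L" by (rule decseq_convergent)
    have "\<beta> \<le> L" using L by (rule LIMSEQ_le_const) (use lowb X_def in auto)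
    moreover have "(\<lambda>T. Delta_bar G1 Nt sn2 x v ap Q T) \<longlonglongrightarrow> L"
      using L unfolding X_def[abs_def] by (rule LIMSEQ_offset)
    ultimately show ?thesis using bpos by (intro exI[of _ L]) auto
  qed
  show ?thesis using part1 part2a part2b by blast
qed

end
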